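(* Consider the explicit mass update of the kinetic finite volume scheme for the $N$-layer Saint-Venant system with mass exchange, as described in the context. Assume that the function $\chi$ has compact support contained in $[-w_M,w_M]$. Fix $n$ and suppose $H_i^n\ge0$ for all $i$. If the time step $\Delta t^n>0$ satisfies, for every layer $\alpha\in\{1,\dots,N\}$ and every cell $i$, $$\Delta t^n\le\frac{l_\alpha H_i^n\,\Delta x_i}{l_\alpha H_i^n\big(|u^n_{\alpha,i}|+w_M c_i^n\big)+\Delta x_i\big([G^{n+1/2}_{\alpha+1/2,i}]_-+[G^{n+1/2}_{\alpha-1/2,i}]_+\big)}$$ (ratios with zero denominator being omitted), then $H_i^{n+1}\ge0$ for all $i$. Consequently, if this CFL condition holds at every time step and $H_i^0\ge0$ for all $i$, then $H_i^n\ge0$ for all $i$ and $n$. This condition does not depend on the bottom slope.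
   Context: Let $g>0$, $N\ge1$, and $l_1,\dots,l_N\ge0$ with $\sum_\alpha l_\alpha=1$. The real line is partitioned into cells $C_i$ of lengths $\Delta x_i>0$; $\sigma_i^n=\Delta t^n/\Delta x_i$. At time level $n$ the discrete unknowns are the total water heights $H_i^n\ge0$ and arbitrary real layer velocities $u^n_{\alpha,i}$. Let $\chi:\mathbb{R}\to\mathbb{R}$ satisfy $\chi(-w)=\chi(w)\ge0$, $\int\chi=\int w^2\chi=1$. Set $c_i^n=\sqrt{gH_i^n/2}$ and define the discrete Gibbs densities $M^n_{\alpha,i}(\xi)=\frac{l_\alpha H_i^n}{c_i^n}\chi\big(\frac{\xi-u^n_{\alpha,i}}{c_i^n}\big)$ (with $M^n_{\alpha,i}\equiv0$ if $H_i^n=0$). Define $F^{\pm}_{h_\alpha}(X_i)=\int_{\pm\xi\ge0}\xi M^n_{\alpha,i}(\xi)\,d\xi$ (with $\xi<0$ for the minus sign), and $\mathcal F^n_{h_\alpha,i}=F^+_{h_\alpha}(X_i)+F^-_{h_\alpha}(X_{i+1})-F^+_{h_\alpha}(X_{i-1})-F^-_{h_\alpha}(X_i)$. The mass exchange terms are $G^{n+1/2}_{1/2,i}=G^{n+1/2}_{N+1/2,i}=0$ and, for $\alpha=1,\dots,N$, $$\Delta x_i\,G^{n+1/2}_{\alpha+1/2,i}=\sum_{j=1}^{\alpha}\Big(\mathcal F^n_{h_j,i}-l_j\sum_{p=1}^N\mathcal F^n_{h_p,i}\Big).$$ The new total height is $H_i^{n+1}=H_i^n-\sigma_i^n\sum_{\alpha=1}^N\mathcal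 F^n_{h_\alpha,i}$ (the topographic source term and the implicit viscosity/friction step do not modify $H$). Notation: $[a]_+=\max(0,a)$, $[a]_-=\max(0,-a)$. *)

theory Defs
  imports "HOL-Analysis.Analysis"
begin

text \<open>Kinetic finite volume scheme for the N-layer Saint-Venant system.
Cells are indexed by integers; layers by 1..N.\<close>

definition pospart :: "real \<Rightarrow> real" where "pospart a = max 0 a"
definition negpart :: "real \<Rightarrow> real" where "negpart a = max 0 (- a)"

definition cel :: "real \<Rightarrow> real \<Rightarrow> real" where
  "cel g h = sqrt (g * h / 2)"

definition gibbs :: "real \<Rightarrow> real \<Rightarrow> (real \<Rightarrow> real) \<Rightarrow> real \<Rightarrow> real \<Rightarrow> real \<Rightarrow> real" where
  "gibbs g la chi h v \<xi> =
     (if h = 0 then 0 else la * h / cel g h * chi ((\<xi> - v) / cel g h))"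

definition Fplus :: "real \<Rightarrow> real \<Rightarrow> (real \<Rightarrow> real) \<Rightarrow> real \<Rightarrow> real \<Rightarrow> real" where
  "Fplus g la chi h v = (LINT \<xi>:{0..}|lborel. \<xi> * gibbs g la chi h v \<xi>)"

definition Fminus :: "real \<Rightarrow> real \<Rightarrow> (real \<Rightarrow> real) \<Rightarrow> real \<Rightarrow> real \<Rightarrow> real" where
  "Fminus g la chi h v = (LINT \<xi>:{..<0}|lborel. \<xi> * gibbs g la chi h v \<xi>)"

text \<open>Numerical flux difference \<open>\<F>_{h_\<alpha>,i}\<close>; H i = total height in cell i,
  u \<alpha> i = velocity of layer \<alpha> in cell i (all at time level n).\<close>
definition flux :: "real \<Rightarrow> (nat \<Rightarrow> real) \<Rightarrow> (real \<Rightarrow> real) \<Rightarrow> (int \<Rightarrow> real)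
    \<Rightarrow> (nat \<Rightarrow> int \<Rightarrow> real) \<Rightarrow> nat \<Rightarrow> int \<Rightarrow> real" where
  "flux g l chi H u \<alpha> i =
     Fplus g (l \<alpha>) chi (H i) (u \<alpha> i) + Fminus g (l \<alpha>) chi (H (i + 1)) (u \<alpha> (i + 1))
   - Fplus g (l \<alpha>) chi (H (i - 1)) (u \<alpha> (i - 1)) - Fminus g (l \<alpha>) chi (H i) (u \<alpha> i)"

text \<open>Mass exchange term: Gex ... k i stands for G_{k+1/2,i}, k = 0..N.\<close>
definition Gex :: "real \<Rightarrow> nat \<Rightarrow> (nat \<Rightarrow> real) \<Rightarrow> (real \<Rightarrow> real) \<Rightarrow> (int \<Rightarrow> real)
    \<Rightarrow> (nat \<Rightarrow> int \<Rightarrow> real) \<Rightarrow> (int \<Rightarrow> real) \<Rightarrow> nat \<Rightarrow> int \<Rightarrow> real" where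
  "Gex g N l chi H u dx k i =
     (if k = 0 \<or> k = N then 0
      else (\<Sum>j = 1..k. flux g l chi H u j i - l j * (\<Sum>p = 1..N. flux g l chi H u p i)) / dx i)"

definition cfl :: "real \<Rightarrow> nat \<Rightarrow> (nat \<Rightarrow> real) \<Rightarrow> (real \<Rightarrow> real) \<Rightarrow> real \<Rightarrow> (int \<Rightarrow> real)
    \<Rightarrow> (nat \<Rightarrow> int \<Rightarrow> real) \<Rightarrow> (int \<Rightarrow> real) \<Rightarrow> real \<Rightarrow> bool" where
  "cfl g N l chi wM H u dx dt \<longleftrightarrow> dt > 0 \<and>
     (\<forall>\<alpha>\<in>{1..N}. \<forall>i. (let D = l \<alpha> * H i * (\<bar>u \<alpha> i\<bar> + wM * cel g (H i))
                          + dx i * (negpart (Gex g N l chi H u dx \<alpha> i)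
                                    + pospart (Gex g N l chi H u dx (\<alpha> - 1) i))
                     in D \<noteq> 0 \<longrightarrow> dt \<le> l \<alpha> * H i * dx i / D))"

end

theory Submission imports Defs begin
lemma kin_bound:
  fixes phi :: "real \<Rightarrow> real" and K :: real
  assumes meas: "phi \<in> borel_measurable borel" and nn: "\<And>x. phi x \<ge> 0"
    and int: "integrable lborel phi"
    and supp: "\<And>x. phi x \<noteq> 0 \<Longrightarrow> \<bar>x\<bar> \<le> K"
  shows "(LINT x:{0..}|lborel. x * phi x) \<ge> 0"
    and "(LINT x:{..<0}|lborel. x * phi x) \<le> 0"
    and "(LINT x:{0..}|lborel. x * phi x) - (LINT x:{..<0}|lborel. x * phi x) \<le> K * (LINT x|lborel. phi x)"
proof -
  show "(LINT x:{0..}|lborel. x * phi x) \<ge> 0"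
    unfolding set_lebesgue_integral_def
    by (rule Bochner_Integration.integral_nonneg) (auto simp: indicator_def nn)
  have "0 \<le> integral\<^sup>L lborel (\<lambda>x. - (indicator {..<0} x *\<^sub>R (x * phi x)))"
    by (rule Bochner_Integration.integral_nonneg) (auto simp: indicator_def nn mult_nonpos_nonneg)
  then show "(LINT x:{..<0}|lborel. x * phi x) \<le> 0"
    unfolding set_lebesgue_integral_def by simp
  have mx: "(\<lambda>x. x * phi x) \<in> borel_measurable lborel" using meas by measurable
  have ix: "integrable lborel (\<lambda>x. x * phi x)"
  proof (rule Bochner_Integration.integrable_bound[where f="\<lambda>x. K * phi x"])
    show "integrable lborel (\<lambda>x. K * phi x)" using int by simp
    show "(\<lambda>x. x * phi x) \<in> borel_measurable lborel" by (rule mx)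
    show "AE x in lborel. norm (x * phi x) \<le> norm (K * phi x)"
    proof (rule AE_I2)
      fix x show "norm (x * phi x) \<le> norm (K * phi x)"
      proof (cases "phi x = 0")
        case False
        then have "\<bar>x\<bar> \<le> K" by (rule supp)
        then show ?thesis using nn[of x] by (simp add: abs_mult mult_right_mono)
      qed simp
    qed
  qed
  have i1: "integrable lborel (\<lambda>x. indicator {0..} x *\<^sub>R (x * phi x))"
    by (rule integrable_mult_indicator) (auto simp: ix)
  have i2: "integrable lborel (\<lambda>x. indicator {..<0} x *\<^sub>R (x * phi x))"
    by (rule integrable_mult_indicator) (auto simp: ix)
  have "(LINT x:{0..}|lborel. x * phi x) - (LINT x:{..<0}|lborel. x * phi x)
      = integral\<^sup>L lborel (\<lambda>x. indicator {0..} x *\<^sub>R (x * phi x) - indicator {..<0} x *\<^sub>R (x * phi x))"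
    unfolding set_lebesgue_integral_def using i1 i2 by (simp add: integral_diff)
  also have "\<dots> = integral\<^sup>L lborel (\<lambda>x. \<bar>x\<bar> * phi x)"
    by (rule Bochner_Integration.integral_cong) (auto simp: indicator_def)
  also have "\<dots> \<le> integral\<^sup>L lborel (\<lambda>x. K * phi x)"
  proof (rule Bochner_Integration.integral_mono)
    show "integrable lborel (\<lambda>x. \<bar>x\<bar> * phi x)"
      using integrable_abs[OF ix] by (simp add: abs_mult nn)
    show "integrable lborel (\<lambda>x. K * phi x)" using int by simp
    fix x show "\<bar>x\<bar> * phi x \<le> K * phi x"
    proof (cases "phi x = 0")
      case False
      then have "\<bar>x\<bar> \<le> K" by (rule supp)
      then show ?thesis using nn[of x] by (simp add: mult_right_mono)
    qed simp
  qed
  also have "\<dots> = K * (LINT x|lborel. phi x)" by simp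
  finally show "(LINT x:{0..}|lborel. x * phi x) - (LINT x:{..<0}|lborel. x * phi x) \<le> K * (LINT x|lborel. phi x)" .
qed
lemma gibbs_props:
  fixes g la h v wM :: real and chi :: "real \<Rightarrow> real"
  assumes g: "g > 0" and h: "h > 0" and la: "la \<ge> 0"
    and chi_nonneg: "\<forall>w. chi w \<ge> 0"
    and chi_int: "integrable lborel chi"
    and chi_mass: "(LINT w|lborel. chi w) = 1"
    and chi_supp: "\<forall>w. w \<notin> {- wM..wM} \<longrightarrow> chi w = 0"
  shows "gibbs g la chi h v \<in> borel_measurable borel"
    and "\<And>x. gibbs g la chi h v x \<ge> 0"
    and "integrable lborel (gibbs g la chi h v)"
    and "\<And>x. gibbs g la chi h v x \<noteq> 0 \<Longrightarrow> \<bar>x\<bar> \<le> \<bar>v\<bar> + wM * cel g h"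
    and "(LINT x|lborel. gibbs g la chi h v x) = la * h"
proof -
  define c where "c = cel g h"
  have c: "c > 0" using g h by (simp add: c_def cel_def)
  have gd: "gibbs g la chi h v = (\<lambda>x. la * h / c * chi ((x - v) / c))"
    using h by (auto simp: gibbs_def c_def)
  have [measurable]: "chi \<in> borel_measurable borel"
    using chi_int by (simp add: borel_measurable_integrable)
  show "gibbs g la chi h v \<in> borel_measurable borel" unfolding gd by measurable
  show "\<And>x. gibbs g la chi h v x \<ge> 0" unfolding gd using la h c chi_nonneg by simp
  have aff: "(\<lambda>x. gibbs g la chi h v (v + c * x)) = (\<lambda>x. la * h / c * chi x)"
    unfolding gd using c by auto
  have "integrable lborel (\<lambda>x. gibbs g la chi h v (v + c * x))"
    unfolding aff using chi_int by simp
  then show "integrable lborel (gibbs g la chi h v)"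
    using lborel_integrable_real_affine_iff[of c "gibbs g la chi h v" v] c by simp
  show "\<And>x. gibbs g la chi h v x \<noteq> 0 \<Longrightarrow> \<bar>x\<bar> \<le> \<bar>v\<bar> + wM * cel g h"
  proof -
    fix x assume "gibbs g la chi h v x \<noteq> 0"
    then have "chi ((x - v) / c) \<noteq> 0" unfolding gd by auto
    then have "(x - v) / c \<in> {- wM..wM}" using chi_supp by blast
    then have "\<bar>(x - v) / c\<bar> \<le> wM" by auto
    then have "\<bar>x - v\<bar> \<le> wM * c" using c by (simp add: abs_div pos_divide_le_eq)
    then show "\<bar>x\<bar> \<le> \<bar>v\<bar> + wM * cel g h" unfolding c_def by linarith
  qed
  have "(LINT x|lborel. gibbs g la chi h v x) = \<bar>c\<bar> *\<^sub>R (LINT x|lborel. gibbs g la chi h v (v + c * x))"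
    using lborel_integral_real_affine[of c "gibbs g la chi h v" v] c by simp
  also have "\<dots> = c * (la * h / c * (LINT x|lborel. chi x))" unfolding aff using c by simp
  also have "\<dots> = la * h" using c chi_mass by simp
  finally show "(LINT x|lborel. gibbs g la chi h v x) = la * h" .
qed

lemma F_props:
  fixes g la h v wM :: real and chi :: "real \<Rightarrow> real"
  assumes g: "g > 0" and h: "h \<ge> 0" and la: "la \<ge> 0"
    and chi_nonneg: "\<forall>w. chi w \<ge> 0"
    and chi_int: "integrable lborel chi"
    and chi_mass: "(LINT w|lborel. chi w) = 1"
    and chi_supp: "\<forall>w. w \<notin> {- wM..wM} \<longrightarrow> chi w = 0"
  shows "Fplus g la chi h v \<ge> 0" and "Fminus g la chi h v \<le> 0"
    and "Fplus g la chi h v - Fminus g la chi h v \<le> la * h * (\<bar>v\<bar> + wM * cel g h)"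
proof -
  have "(h = 0 \<and> Fplus g la chi h v = 0 \<and> Fminus g la chi h v = 0) \<or> h > 0" using h
    by (auto simp: Fplus_def Fminus_def gibbs_def)
  moreover
  {
    assume hp: "h > 0"
    note P = gibbs_props[OF g hp la chi_nonneg chi_int chi_mass chi_supp, of v]
    note Q = kin_bound[OF P(1) P(2) P(3) P(4)]
    have "Fplus g la chi h v \<ge> 0" "Fminus g la chi h v \<le> 0"
      "Fplus g la chi h v - Fminus g la chi h v \<le> la * h * (\<bar>v\<bar> + wM * cel g h)"
      using Q P(5) unfolding Fplus_def Fminus_def by (auto simp: mult.commute)
  }
  ultimately show "Fplus g la chi h v \<ge> 0" and "Fminus g la chi h v \<le> 0"
    and "Fplus g la chi h v - Fminus g la chi h v \<le> la * h * (\<bar>v\<bar> + wM * cel g h)"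
    by auto
qed
lemma step_pos:
  fixes g wM dt :: real and N :: nat and l :: "nat \<Rightarrow> real" and chi :: "real \<Rightarrow> real"
    and dx :: "int \<Rightarrow> real" and H :: "int \<Rightarrow> real" and u :: "nat \<Rightarrow> int \<Rightarrow> real"
  assumes g_pos: "g > 0"
    and l_nonneg: "\<forall>\<alpha>\<in>{1..N}. l \<alpha> \<ge> 0"
    and l_sum: "(\<Sum>\<alpha> = 1..N. l \<alpha>) = 1"
    and dx_pos: "\<forall>i. dx i > 0"
    and chi_nonneg: "\<forall>w. chi w \<ge> 0"
    and chi_int: "integrable lborel chi"
    and chi_mass: "(LINT w|lborel. chi w) = 1"
    and chi_supp: "\<forall>w. w \<notin> {- wM..wM} \<longrightarrow> chi w = 0"
    and wM: "wM \<ge> 0"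
    and Hnn: "\<forall>i. H i \<ge> 0"
    and cfl: "cfl g N l chi wM H u dx dt"
  shows "H i - dt / dx i * (\<Sum>\<alpha> = 1..N. flux g l chi H u \<alpha> i) \<ge> 0"
proof -
  define F where "F = (\<lambda>\<alpha>. flux g l chi H u \<alpha> i)"
  define S where "S = (\<Sum>p = 1..N. F p)"
  define Gt where "Gt = (\<lambda>k. (\<Sum>j = 1..k. F j - l j * S) / dx i)"
  define H' where "H' = H i - dt / dx i * S"
  have dxi: "dx i > 0" using dx_pos by auto
  have dt: "dt > 0" using cfl by (simp add: cfl_def)
  have GexG: "Gex g N l chi H u dx k i = Gt k" if "k \<le> N" for k
  proof (cases "k = 0 \<or> k = N")
    case True
    have "(\<Sum>j = 1..N. F j - l j * S) = S - S * (\<Sum>j = 1..N. l j)"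
      by (simp add: sum_subtractf S_def sum_distrib_left mult.commute)
    then have "(\<Sum>j = 1..N. F j - l j * S) = 0" using l_sum by simp
    then show ?thesis using True by (auto simp: Gex_def Gt_def)
  next
    case False
    then show ?thesis by (simp add: Gex_def Gt_def F_def S_def)
  qed
  have lam: "l \<alpha> * H' \<ge> 0" if a: "\<alpha> \<in> {1..N}" for \<alpha>
  proof -
    have la: "l \<alpha> \<ge> 0" using a l_nonneg by auto
    define K where "K = \<bar>u \<alpha> i\<bar> + wM * cel g (H i)"
    have ce: "cel g (H i) \<ge> 0" using g_pos Hnn by (simp add: cel_def)
    have K: "K \<ge> 0" using wM ce by (simp add: K_def)
    note FP = F_props[OF g_pos _ la chi_nonneg chi_int chi_mass chi_supp]
    have Fle: "F \<alpha> \<le> l \<alpha> * H i * K"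
      using FP(1)[OF Hnn[rule_format, of "i - 1"], of "u \<alpha> (i - 1)"]
        FP(2)[OF Hnn[rule_format, of "i + 1"], of "u \<alpha> (i + 1)"]
        FP(3)[OF Hnn[rule_format, of "i"], of "u \<alpha> i"]
      unfolding F_def flux_def K_def by linarith
    obtain m where m: "\<alpha> = Suc m" using a by (cases \<alpha>) auto
    have "Gt \<alpha> - Gt (\<alpha> - 1) = (F \<alpha> - l \<alpha> * S) / dx i"
      unfolding Gt_def m by (simp add: diff_divide_distrib add_divide_distrib)
    moreover have GA: "Gex g N l chi H u dx \<alpha> i = Gt \<alpha>" using a GexG by auto
    moreover have GB: "Gex g N l chi H u dx (\<alpha> - 1) i = Gt (\<alpha> - 1)" using a GexG by auto
    ultimately have dG: "(F \<alpha> - l \<alpha> * S) / dx i \<ge> - (negpart (Gex g N l chi H u dx \<alpha> i)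
                                    + pospart (Gex g N l chi H u dx (\<alpha> - 1) i))"
      by (auto simp: negpart_def pospart_def)
    define D where "D = l \<alpha> * H i * K + dx i * (negpart (Gex g N l chi H u dx \<alpha> i)
                                    + pospart (Gex g N l chi H u dx (\<alpha> - 1) i))"
    have D0: "D \<ge> 0" unfolding D_def using la Hnn K dxi
      by (intro add_nonneg_nonneg mult_nonneg_nonneg) (auto simp: negpart_def pospart_def)
    have cflD: "D \<noteq> 0 \<longrightarrow> dt \<le> l \<alpha> * H i * dx i / D"
      using cfl a unfolding cfl_def D_def K_def Let_def by auto
    have eq: "l \<alpha> * H' = l \<alpha> * H i - dt / dx i * F \<alpha> + dt * ((F \<alpha> - l \<alpha> * S) / dx i)"
      unfolding H'_def using dxi by (simp add: field_simps)
    have r1: "dt / dx i * F \<alpha> \<le> dt / dx i * (l \<alpha> * H i * K)"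
      using Fle dt dxi by (intro mult_left_mono) auto
    have r2: "dt * ((F \<alpha> - l \<alpha> * S) / dx i) \<ge> dt * (- (negpart (Gex g N l chi H u dx \<alpha> i)
                                    + pospart (Gex g N l chi H u dx (\<alpha> - 1) i)))"
      using dG dt by (intro mult_left_mono) auto
    have "l \<alpha> * H' \<ge> l \<alpha> * H i - dt * D / dx i"
    proof -
      have "dt * D / dx i = dt / dx i * (l \<alpha> * H i * K) + dt * (negpart (Gex g N l chi H u dx \<alpha> i)
                                    + pospart (Gex g N l chi H u dx (\<alpha> - 1) i))"
        unfolding D_def using dxi by (simp add: field_simps)
      then show ?thesis using eq r1 r2 by (simp add: algebra_simps)
    qed
    moreover have "dt * D / dx i \<le> l \<alpha> * H i"
    proof (cases "D = 0")
      case True then show ?thesis using la Hnn by simp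
    next
      case False
      then have "D > 0" using D0 by simp
      then have "dt * D \<le> l \<alpha> * H i * dx i" using cflD False by (simp add: pos_le_divide_eq)
      then show ?thesis using dxi by (simp add: pos_divide_le_eq)
    qed
    ultimately show ?thesis by linarith
  qed
  have "H' = (\<Sum>\<alpha> = 1..N. l \<alpha>) * H'" using l_sum by simp
  also have "\<dots> = (\<Sum>\<alpha> = 1..N. l \<alpha> * H')" by (simp add: sum_distrib_right)
  also have "\<dots> \<ge> 0" using lam by (intro sum_nonneg) auto
  finally show ?thesis unfolding H'_def S_def F_def .
qed
theorem mainTheorem3:
  fixes g wM :: real and N :: nat and l :: "nat \<Rightarrow> real" and chi :: "real \<Rightarrow> real"
    and dx :: "int \<Rightarrow> real" and dt :: "nat \<Rightarrow> real"
    and H :: "nat \<Rightarrow> int \<Rightarrow> real" and u :: "nat \<Rightarrow> nat \<Rightarrow> int \<Rightarrow> real"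
  assumes g_pos: "g > 0"
    and N_pos: "N \<ge> 1"
    and l_nonneg: "\<forall>\<alpha>\<in>{1..N}. l \<alpha> \<ge> 0"
    and l_sum: "(\<Sum>\<alpha> = 1..N. l \<alpha>) = 1"
    and dx_pos: "\<forall>i. dx i > 0"
    and chi_even: "\<forall>w. chi (- w) = chi w"
    and chi_nonneg: "\<forall>w. chi w \<ge> 0"
    and chi_int: "integrable lborel chi"
    and chi_int2: "integrable lborel (\<lambda>w. w\<^sup>2 * chi w)"
    and chi_mass: "(LINT w|lborel. chi w) = 1"
    and chi_moment: "(LINT w|lborel. w\<^sup>2 * chi w) = 1"
    and chi_supp: "\<forall>w. w \<notin> {- wM..wM} \<longrightarrow> chi w = 0"
    and scheme: "\<forall>n i. H (Suc n) i =
        H n i - dt n / dx i * (\<Sum>\<alpha> = 1..N. flux g l chi (H n) (u n) \<alpha> i)"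
  shows "(\<forall>n. (\<forall>i. H n i \<ge> 0) \<and> cfl g N l chi wM (H n) (u n) dx (dt n)
               \<longrightarrow> (\<forall>i. H (Suc n) i \<ge> 0))
       \<and> ((\<forall>i. H 0 i \<ge> 0) \<and> (\<forall>n. cfl g N l chi wM (H n) (u n) dx (dt n))
               \<longrightarrow> (\<forall>n i. H n i \<ge> 0))"
proof -
  have wM: "wM \<ge> 0"
  proof (rule ccontr)
    assume "\<not> wM \<ge> 0"
    then have "\<forall>w. chi w = 0" using chi_supp by auto
    then have "chi = (\<lambda>w. 0)" by auto
    then show False using chi_mass by simp
  qed
  have one: "\<forall>n. (\<forall>i. H n i \<ge> 0) \<and> cfl g N l chi wM (H n) (u n) dx (dt n)
               \<longrightarrow> (\<forall>i. H (Suc n) i \<ge> 0)"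
  proof (intro allI impI)
    fix n i assume a: "(\<forall>i. H n i \<ge> 0) \<and> cfl g N l chi wM (H n) (u n) dx (dt n)"
    show "H (Suc n) i \<ge> 0"
      using step_pos[OF g_pos l_nonneg l_sum dx_pos chi_nonneg chi_int chi_mass chi_supp wM,
          of "H n" "u n" "dt n" i] a scheme by auto
  qed
  moreover have "(\<forall>i. H 0 i \<ge> 0) \<and> (\<forall>n. cfl g N l chi wM (H n) (u n) dx (dt n))
               \<longrightarrow> (\<forall>n i. H n i \<ge> 0)"
  proof (intro impI allI)
    fix n i assume a: "(\<forall>i. H 0 i \<ge> 0) \<and> (\<forall>n. cfl g N l chi wM (H n) (u n) dx (dt n))"
    have "\<forall>i. H n i \<ge> 0"
    proof (induction n)
      case 0 then show ?case using a by auto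
    next
      case (Suc n) then show ?case using one a by blast
    qed
    then show "H n i \<ge> 0" by auto
  qed
  ultimately show ?thesis by blast
qed

end
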